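(* Let $G$ be an arbitrary group and $E$ a real Banach space. Then $KJ(G;E)=PJ(G;E)\oplus B(G;E)$ (direct sum of linear subspaces).
   Context: $KJ(G;E)$ is the real vector space of functions $f\colon G\to E$ for which there exists $c>0$ with $\|f(xy)+f(xy^{-1})-2f(x)\|\le c$ for all $x,y\in G$ (quasi-Jensen functions). $PJ(G;E)$ is the subspace of $f\in KJ(G;E)$ with $f(x^n)=nf(x)$ for all $x\in G$, $n\in\mathbb{Z}$ (pseudo-Jensen functions). $B(G;E)$ is the space of bounded functions $G\to E$. *)

theory Defs
  imports "HOL-Analysis.Analysis" "HOL-Algebra.Group"
begin

text \<open>Functions are normalised to be 0 outside the carrier, so that they correspond exactly
  to functions carrier G \<rightarrow> E.\<close>

definition on_carrier :: "('g, 'm) monoid_scheme \<Rightarrow> ('g \<Rightarrow> 'e::real_normed_vector) \<Rightarrow> bool" where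
  "on_carrier G f \<longleftrightarrow> (\<forall>x. x \<notin> carrier G \<longrightarrow> f x = 0)"

definition KJ :: "('g, 'm) monoid_scheme \<Rightarrow> ('g \<Rightarrow> 'e::real_normed_vector) set" where
  "KJ G = {f. on_carrier G f \<and>
     (\<exists>c>0. \<forall>x\<in>carrier G. \<forall>y\<in>carrier G.
        norm (f (x \<otimes>\<^bsub>G\<^esub> y) + f (x \<otimes>\<^bsub>G\<^esub> inv\<^bsub>G\<^esub> y) - 2 *\<^sub>R f x) \<le> c)}"

definition PJ :: "('g, 'm) monoid_scheme \<Rightarrow> ('g \<Rightarrow> 'e::real_normed_vector) set" where
  "PJ G = {f. f \<in> KJ G \<and>
     (\<forall>x\<in>carrier G. \<forall>n::int. f (x [^]\<^bsub>G\<^esub> n) = of_int n *\<^sub>R f x)}"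

definition BF :: "('g, 'm) monoid_scheme \<Rightarrow> ('g \<Rightarrow> 'e::real_normed_vector) set" where
  "BF G = {f. on_carrier G f \<and> (\<exists>c. \<forall>x\<in>carrier G. norm (f x) \<le> c)}"

end

theory Submission
  imports Defs
begin

lemma hyers_conv:
  fixes h :: "int \<Rightarrow> 'e::banach"
  assumes D: "\<And>m n. norm (h (m+n) - h m - h n) \<le> D"
  shows "\<exists>L. (\<lambda>n. (1/2^n) *\<^sub>R h (2^n*k)) \<longlonglongrightarrow> L \<and> norm (L - h k) \<le> D"
proof -
  define s where "s n = (1/2^n) *\<^sub>R h (2^n*k)" for n :: nat
  define d where "d n = s (Suc n) - s n" for n
  have D0: "0 \<le> D" using D[of 0 0] norm_ge_zero order_trans by blast
  have dn: "norm (d n) \<le> (D/2) * (1/2)^n" for n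
  proof -
    have "d n = (1/2^(Suc n)) *\<^sub>R (h (2^n*k + 2^n*k) - h (2^n*k) - h (2^n*k))"
      unfolding d_def s_def by (simp add: algebra_simps) (simp flip: scaleR_add_left)
    hence "norm (d n) = (1/2^(Suc n)) * norm (h (2^n*k + 2^n*k) - h (2^n*k) - h (2^n*k))"
      by simp
    also have "\<dots> \<le> (1/2^(Suc n)) * D" using D[of "2^n*k" "2^n*k"] by (intro mult_left_mono) auto
    also have "\<dots> = (D/2) * (1/2)^n" by (simp add: power_divide)
    finally show ?thesis .
  qed
  have sg: "summable (\<lambda>n. (D/2) * (1/2::real)^n)"
    by (intro summable_mult summable_geometric) simp
  have sd: "summable d" by (rule summable_comparison_test[OF _ sg]) (use dn in auto)
  have snd: "summable (\<lambda>n. norm (d n))" by (rule summable_comparison_test[OF _ sg]) (use dn in auto)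
  have "(\<lambda>n. \<Sum>i<n. d i) \<longlonglongrightarrow> suminf d" using sd summable_LIMSEQ by blast
  moreover have "(\<Sum>i<n. d i) = s n - s 0" for n unfolding d_def by (rule sum_lessThan_telescope)
  ultimately have "(\<lambda>n. s n - s 0) \<longlonglongrightarrow> suminf d" by simp
  hence "(\<lambda>n. (s n - s 0) + s 0) \<longlonglongrightarrow> suminf d + s 0" by (intro tendsto_add) auto
  hence lim: "s \<longlonglongrightarrow> suminf d + s 0" by simp
  have "norm (suminf d) \<le> (\<Sum>n. norm (d n))" using summable_norm snd by blast
  also have "\<dots> \<le> (\<Sum>n. (D/2) * (1/2::real)^n)" using dn snd sg by (intro suminf_le) auto
  also have "\<dots> = (D/2) * (\<Sum>n. (1/2::real)^n)"
    by (rule suminf_mult) (rule summable_geometric, simp)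
  also have "\<dots> = D" using suminf_geometric[of "1/2::real"] by simp
  finally have "norm (suminf d) \<le> D" .
  moreover have "s 0 = h k" by (simp add: s_def)
  ultimately show ?thesis using lim unfolding s_def[abs_def] by auto
qed

lemma hyers_int:
  fixes h :: "int \<Rightarrow> 'e::banach"
  assumes D: "\<And>m n. norm (h (m+n) - h m - h n) \<le> D"
  shows "\<exists>v. \<forall>k. (\<lambda>n. (1/2^n) *\<^sub>R h (2^n*k)) \<longlonglongrightarrow> of_int k *\<^sub>R v
              \<and> norm (h k - of_int k *\<^sub>R v) \<le> D"
proof -
  define A where "A k = lim (\<lambda>n. (1/2^n) *\<^sub>R h (2^n*k))" for k
  have AL: "(\<lambda>n. (1/2^n) *\<^sub>R h (2^n*k)) \<longlonglongrightarrow> A k" for k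
  proof -
    have "convergent (\<lambda>n. (1/2^n) *\<^sub>R h (2^n*k))"
      using hyers_conv[OF D, of k] unfolding convergent_def by blast
    thus ?thesis unfolding A_def by (simp add: convergent_LIMSEQ_iff)
  qed
  have AB: "norm (A k - h k) \<le> D" for k
  proof -
    obtain L where L: "(\<lambda>n. (1/2^n) *\<^sub>R h (2^n*k)) \<longlonglongrightarrow> L" "norm (L - h k) \<le> D"
      using hyers_conv[OF D, of k] by blast
    have "L = A k" using L(1) AL[of k] by (rule LIMSEQ_unique)
    thus ?thesis using L(2) by simp
  qed
  have add: "A (k + l) = A k + A l" for k l
  proof -
    have D0: "0 \<le> D" using D[of 0 0] norm_ge_zero order_trans by blast
    let ?e = "\<lambda>n. (1/2^n) *\<^sub>R h (2^n*(k+l)) - (1/2^n) *\<^sub>R h (2^n*k) - (1/2^n) *\<^sub>R h (2^n*l)"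
    have "?e \<longlonglongrightarrow> A (k+l) - A k - A l" by (intro tendsto_diff AL)
    moreover have "?e \<longlonglongrightarrow> 0"
    proof (rule Lim_null_comparison)
      show "\<forall>\<^sub>F n in sequentially. norm (?e n) \<le> D * (1/2)^n"
      proof (intro always_eventually allI)
        fix n :: nat
        have "?e n = (1/2^n) *\<^sub>R (h (2^n*k + 2^n*l) - h (2^n*k) - h (2^n*l))"
          by (simp add: scaleR_diff_right distrib_left)
        hence "norm (?e n) = (1/2^n) * norm (h (2^n*k + 2^n*l) - h (2^n*k) - h (2^n*l))" by simp
        also have "\<dots> \<le> (1/2^n) * D" using D[of "2^n*k" "2^n*l"] by (intro mult_left_mono) auto
        finally show "norm (?e n) \<le> D * (1/2)^n" by (simp add: power_divide mult.commute)
      qed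
      show "(\<lambda>n. D * (1/2::real)^n) \<longlonglongrightarrow> 0"
        by (intro tendsto_mult_right_zero LIMSEQ_realpow_zero) auto
    qed
    ultimately have "A (k+l) - A k - A l = 0" using LIMSEQ_unique by blast
    thus ?thesis by (simp add: algebra_simps)
  qed
  have lin: "A k = of_int k *\<^sub>R A 1" for k
  proof (induct k rule: int_induct[where k=0])
    case base
    have "A 0 = A 0 + A 0" using add[of 0 0] by simp
    thus ?case by simp
  next
    case (step1 i)
    thus ?case using add[of i 1] by (simp add: algebra_simps)
  next
    case (step2 i)
    have "A i = A (i - 1) + A 1" using add[of "i-1" 1] by simp
    thus ?case using step2 by (simp add: algebra_simps)
  qed
  show ?thesis
  proof (rule exI[of _ "A 1"], intro allI conjI)
    fix k
    show "(\<lambda>n. (1/2^n) *\<^sub>R h (2^n*k)) \<longlonglongrightarrow> of_int k *\<^sub>R A 1" using AL[of k] lin[of k] by simp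
    show "norm (h k - of_int k *\<^sub>R A 1) \<le> D" using AB[of k] lin[of k] by (simp add: norm_minus_commute)
  qed
qed

lemma norm3: "norm (a + b - c) \<le> norm a + norm b + norm (c::'a::real_normed_vector)"
proof -
  have "norm (a+b-c) \<le> norm (a+b) + norm c" by (rule norm_triangle_ineq4)
  moreover have "norm (a+b) \<le> norm a + norm b" by (rule norm_triangle_ineq)
  ultimately show ?thesis by linarith
qed

lemma KJ_add_BF:
  fixes G (structure)
  assumes G: "group G" and f: "f \<in> KJ G" and b: "b \<in> BF G"
  shows "(\<lambda>x. f x + b x) \<in> KJ G"
proof -
  interpret group G by (rule G)
  obtain c where c: "c > 0" "\<forall>x\<in>carrier G. \<forall>y\<in>carrier G.
        norm (f (x \<otimes> y) + f (x \<otimes> inv y) - 2 *\<^sub>R f x) \<le> c"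
    using f unfolding KJ_def by blast
  obtain M where M: "\<forall>x\<in>carrier G. norm (b x) \<le> M" using b unfolding BF_def by blast
  have M0: "0 \<le> M" using M[rule_format, OF one_closed] norm_ge_zero order_trans by blast
  have "norm ((f (x \<otimes> y) + b (x \<otimes> y)) + (f (x \<otimes> inv y) + b (x \<otimes> inv y)) - 2 *\<^sub>R (f x + b x))
        \<le> c + 4 * M" if x: "x \<in> carrier G" and y: "y \<in> carrier G" for x y
  proof -
    have eq: "(f (x \<otimes> y) + b (x \<otimes> y)) + (f (x \<otimes> inv y) + b (x \<otimes> inv y)) - 2 *\<^sub>R (f x + b x)
       = (f (x \<otimes> y) + f (x \<otimes> inv y) - 2 *\<^sub>R f x) + (b (x \<otimes> y) + b (x \<otimes> inv y) - 2 *\<^sub>R b x)"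
      by (simp add: algebra_simps)
    have "norm (b (x \<otimes> y) + b (x \<otimes> inv y) - 2 *\<^sub>R b x) \<le> norm (b (x \<otimes> y)) + norm (b (x \<otimes> inv y)) + norm (2 *\<^sub>R b x)"
      by (rule norm3)
    also have "\<dots> \<le> M + M + 2 * M" using M x y by (intro add_mono) auto
    finally have "norm (b (x \<otimes> y) + b (x \<otimes> inv y) - 2 *\<^sub>R b x) \<le> 4 * M" by simp
    moreover have "norm (f (x \<otimes> y) + f (x \<otimes> inv y) - 2 *\<^sub>R f x) \<le> c" using c x y by blast
    ultimately show ?thesis unfolding eq by (meson norm_triangle_ineq add_mono order_trans)
  qed
  moreover have "on_carrier G (\<lambda>x. f x + b x)"
    using f b unfolding KJ_def BF_def on_carrier_def by simp
  ultimately show ?thesis unfolding KJ_def using c M0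
    by (intro CollectI conjI exI[of _ "c + 4 * M"]) auto
qed

lemma BF_uminus: "b \<in> BF G \<Longrightarrow> (\<lambda>x. - b x) \<in> BF G"
  unfolding BF_def on_carrier_def by simp

lemma PJ_BF_zero:
  fixes G (structure)
  assumes G: "group G" and p: "p \<in> PJ G" and b: "p \<in> BF G"
  shows "p = (\<lambda>x. 0)"
proof
  interpret group G by (rule G)
  fix x
  show "p x = 0"
  proof (cases "x \<in> carrier G")
    case False
    have "on_carrier G p" using p unfolding PJ_def KJ_def by blast
    thus ?thesis using False unfolding on_carrier_def by blast
  next
    case True
    obtain M where M: "\<forall>x\<in>carrier G. norm (p x) \<le> M" using b unfolding BF_def by blast
    have hom: "p (x [^] (int n)) = real n *\<^sub>R p x" for n
    proof -
      have "\<forall>x\<in>carrier G. \<forall>n::int. p (x [^] n) = of_int n *\<^sub>R p x" using p unfolding PJ_def by blast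
      hence "p (x [^] (int n)) = of_int (int n) *\<^sub>R p x" using True by blast
      thus ?thesis by simp
    qed
    show ?thesis
    proof (rule ccontr)
      assume "p x \<noteq> 0"
      hence "norm (p x) > 0" by simp
      then obtain n :: nat where n: "M < real n * norm (p x)" using ex_less_of_nat_mult by blast
      have "norm (p (x [^] (int n))) = real n * norm (p x)" using hom[of n] by simp
      moreover have "norm (p (x [^] (int n))) \<le> M" using M True by simp
      ultimately show False using n by simp
    qed
  qed
qed

lemma KJ_decomp:
  fixes G (structure) and f :: "'g \<Rightarrow> 'e::banach"
  assumes G: "group G" and f: "f \<in> KJ G"
  shows "\<exists>p b. p \<in> PJ G \<and> b \<in> BF G \<and> f = (\<lambda>x. p x + b x)"
proof -
  interpret group G by (rule G)
  obtain c where c: "c > 0" "\<And>x y. x \<in> carrier G \<Longrightarrow> y \<in> carrier G \<Longrightarrow>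
        norm (f (x \<otimes> y) + f (x \<otimes> inv y) - 2 *\<^sub>R f x) \<le> c"
    using f unfolding KJ_def by blast
  have fon: "on_carrier G f" using f unfolding KJ_def by blast
  define h where "h x k = f (x [^] (k::int)) - f \<one>" for x k
  have J: "norm (f (x [^] (m+n)) + f (x [^] (m-n)) - 2 *\<^sub>R f (x [^] m)) \<le> c"
    if x: "x \<in> carrier G" for x and m n :: int
  proof -
    have "x [^] (m+n) = x [^] m \<otimes> x [^] n" by (rule int_pow_mult[OF x])
    moreover have "x [^] (m-n) = x [^] m \<otimes> inv (x [^] n)" by (rule int_pow_diff[OF x])
    ultimately show ?thesis using c(2)[of "x [^] m" "x [^] n"] x by simp
  qed
  have qa: "norm (h x (m+n) - h x m - h x n) \<le> 3/2 * c" if x: "x \<in> carrier G" for x and m n :: int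
  proof -
    define J1 where "J1 = f (x [^] (m+n)) + f (x [^] (m-n)) - 2 *\<^sub>R f (x [^] m)"
    define J2 where "J2 = f (x [^] (n+m)) + f (x [^] (n-m)) - 2 *\<^sub>R f (x [^] n)"
    define J3 where "J3 = f (x [^] (0+(m-n))) + f (x [^] (0-(m-n))) - 2 *\<^sub>R f (x [^] (0::int))"
    have "J1 + J2 - J3 = 2 *\<^sub>R (h x (m+n) - h x m - h x n)"
      unfolding h_def J1_def J2_def J3_def by (simp add: algebra_simps scaleR_2)
    hence "h x (m+n) - h x m - h x n = (1/2) *\<^sub>R (J1 + J2 - J3)" by simp
    hence "norm (h x (m+n) - h x m - h x n) = (1/2) * norm (J1 + J2 - J3)" by simp
    also have "\<dots> \<le> (1/2) * (norm J1 + norm J2 + norm J3)" by (intro mult_left_mono norm3) auto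
    also have "\<dots> \<le> (1/2) * (c + c + c)"
      unfolding J1_def J2_def J3_def using J[OF x, of m n] J[OF x, of n m] J[OF x, of 0 "m-n"]
      by (intro mult_left_mono add_mono) auto
    finally show ?thesis by simp
  qed
  define P where "P x w \<longleftrightarrow> (\<forall>k. (\<lambda>n. (1/2^n) *\<^sub>R h x (2^n*k)) \<longlonglongrightarrow> of_int k *\<^sub>R w
              \<and> norm (h x k - of_int k *\<^sub>R w) \<le> 3/2 * c)" for x w
  define v where "v x = (SOME w. P x w)" for x
  have Pv: "P x (v x)" if x: "x \<in> carrier G" for x
  proof -
    have "\<exists>w. P x w" unfolding P_def by (rule hyers_int) (rule qa[OF x])
    thus ?thesis unfolding v_def by (rule someI_ex)
  qed
  have v: "\<And>x k. x \<in> carrier G \<Longrightarrow> (\<lambda>n. (1/2^n) *\<^sub>R h x (2^n*k)) \<longlonglongrightarrow> of_int k *\<^sub>R v x"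
     "\<And>x k. x \<in> carrier G \<Longrightarrow> norm (h x k - of_int k *\<^sub>R v x) \<le> 3/2 * c"
    using Pv unfolding P_def by blast+
  define p where "p x = (if x \<in> carrier G then v x else 0)" for x
  define b where "b x = f x - p x" for x
  have pon: "on_carrier G p" unfolding on_carrier_def p_def by simp
  have bB: "b \<in> BF G"
  proof -
    have "norm (b x) \<le> 3/2 * c + norm (f \<one>)" if x: "x \<in> carrier G" for x
    proof -
      have "b x = (h x 1 - of_int 1 *\<^sub>R v x) + f \<one>" unfolding b_def p_def h_def using x by simp
      hence "norm (b x) \<le> norm (h x 1 - of_int 1 *\<^sub>R v x) + norm (f \<one>)" by (simp add: norm_triangle_ineq)
      thus ?thesis using v(2)[OF x, of 1] by linarith
    qed
    moreover have "on_carrier G b" using fon pon unfolding on_carrier_def b_def by simp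
    ultimately show ?thesis unfolding BF_def by blast
  qed
  have pK: "p \<in> KJ G"
  proof -
    have "(\<lambda>x. f x + - b x) \<in> KJ G" by (rule KJ_add_BF[OF G f BF_uminus[OF bB]])
    moreover have "(\<lambda>x. f x + - b x) = p" unfolding b_def by auto
    ultimately show ?thesis by simp
  qed
  have hom: "p (x [^] k) = of_int k *\<^sub>R p x" if x: "x \<in> carrier G" for x k
  proof -
    have y: "x [^] k \<in> carrier G" using x by simp
    have "(\<lambda>n. (1/2^n) *\<^sub>R h (x [^] k) (2^n*1)) \<longlonglongrightarrow> of_int 1 *\<^sub>R v (x [^] k)" by (rule v(1)[OF y])
    moreover have "h (x [^] k) (2^n*1) = h x (2^n*k)" for n
      unfolding h_def using int_pow_pow[OF x, of k "2^n"] by (simp add: mult.commute)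
    ultimately have "(\<lambda>n. (1/2^n) *\<^sub>R h x (2^n*k)) \<longlonglongrightarrow> v (x [^] k)" by simp
    hence "v (x [^] k) = of_int k *\<^sub>R v x" using v(1)[OF x, of k] LIMSEQ_unique by blast
    thus ?thesis unfolding p_def using x y by simp
  qed
  have pP: "p \<in> PJ G" unfolding PJ_def using pK hom by blast
  have "f = (\<lambda>x. p x + b x)" unfolding b_def by simp
  thus ?thesis using pP bB by blast
qed

theorem theorem2p10:
  fixes G :: "('g, 'm) monoid_scheme"
  assumes "group G"
  shows "(KJ G :: ('g \<Rightarrow> 'e::banach) set) = {(\<lambda>x. p x + b x) | p b. p \<in> PJ G \<and> b \<in> BF G}
         \<and> PJ G \<inter> BF G = {(\<lambda>x. 0) :: 'g \<Rightarrow> 'e}"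
proof (intro conjI)
  show "(KJ G :: ('g \<Rightarrow> 'e::banach) set) = {(\<lambda>x. p x + b x) | p b. p \<in> PJ G \<and> b \<in> BF G}"
  proof (intro equalityI subsetI)
    fix f :: "'g \<Rightarrow> 'e" assume "f \<in> KJ G"
    then show "f \<in> {(\<lambda>x. p x + b x) | p b. p \<in> PJ G \<and> b \<in> BF G}"
      using KJ_decomp[OF assms] by blast
  next
    fix f :: "'g \<Rightarrow> 'e" assume "f \<in> {(\<lambda>x. p x + b x) | p b. p \<in> PJ G \<and> b \<in> BF G}"
    then obtain p b where "p \<in> PJ G" "b \<in> BF G" "f = (\<lambda>x. p x + b x)" by blast
    then show "f \<in> KJ G" using KJ_add_BF[OF assms, of p b] unfolding PJ_def by simp
  qed
  show "PJ G \<inter> BF G = {(\<lambda>x. 0) :: 'g \<Rightarrow> 'e}"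
  proof (intro equalityI subsetI)
    fix p :: "'g \<Rightarrow> 'e" assume "p \<in> PJ G \<inter> BF G"
    thus "p \<in> {\<lambda>x. 0}" using PJ_BF_zero[OF assms] by blast
  next
    fix p :: "'g \<Rightarrow> 'e" assume "p \<in> {\<lambda>x. 0}"
    hence p: "p = (\<lambda>x. 0)" by simp
    have "p \<in> KJ G" unfolding p KJ_def on_carrier_def by (auto intro: exI[of _ 1])
    moreover have "p \<in> BF G" unfolding p BF_def on_carrier_def by auto
    ultimately show "p \<in> PJ G \<inter> BF G" unfolding PJ_def p by auto
  qed
qed

end
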